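(* For all positive integers $n\geq 2$ and $t$, the Roman domination number of $S(K_n,t)$ is $$\gamma_R(S(K_n,t))=\begin{cases}2\left\lceil\frac{n^t}{n+1}\right\rceil & \text{if } t \text{ is odd},\\[2pt] 2\left\lceil\frac{n^t}{n+1}\right\rceil-1 & \text{if } t \text{ is even}.\end{cases}$$
   Context: For a positive integer $n$ let $[n]=\{1,\dots,n\}$. For positive integers $n,t$, the Sierpiński graph $S(K_n,t)$ is the simple graph with vertex set $[n]^t$ (words $v_1v_2\cdots v_t$ with $v_i\in[n]$), in which $u_1\cdots u_t$ and $v_1\cdots v_t$ are adjacent if and only if there is $s\in[t]$ with $u_j=v_j$ for all $j<s$, $u_s\neq v_s$, and $u_j=v_s$ and $v_j=u_s$ for all $j>s$. A Roman dominating function on a graph $G=(V,E)$ is a function $f:V\to\{0,1,2\}$ such that every vertex $u$ with $f(u)=0$ has a neighbor $v$ with $f(v)=2$. Its weight is $\sum_{v\in V}f(v)$, and the Roman domination number $\gamma_R(G)$ is the minimum weight of a Roman dominating function on $G$. *)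

theory Defs
  imports Complex_Main
begin

definition roman_dominating :: "'a set \<Rightarrow> ('a \<Rightarrow> 'a \<Rightarrow> bool) \<Rightarrow> ('a \<Rightarrow> nat) \<Rightarrow> bool" where
  "roman_dominating V E f \<longleftrightarrow>
     (\<forall>v\<in>V. f v \<in> {0,1,2}) \<and>
     (\<forall>u\<in>V. f u = 0 \<longrightarrow> (\<exists>v\<in>V. E u v \<and> f v = 2))"

definition roman_weight :: "'a set \<Rightarrow> ('a \<Rightarrow> nat) \<Rightarrow> nat" where
  "roman_weight V f = (\<Sum>v\<in>V. f v)"

definition roman_domination_number :: "'a set \<Rightarrow> ('a \<Rightarrow> 'a \<Rightarrow> bool) \<Rightarrow> nat" where
  "roman_domination_number V E = Inf {roman_weight V f | f. roman_dominating V E f}"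

(* Sierpinski graph S(K_n,t): vertices are words of length t over {1..n},
   represented as lists; positions are 0-based here (s = 0..t-1). *)
definition sierp_vertices :: "nat \<Rightarrow> nat \<Rightarrow> nat list set" where
  "sierp_vertices n t = {w. length w = t \<and> set w \<subseteq> {1..n}}"

definition sierp_adj :: "nat \<Rightarrow> nat list \<Rightarrow> nat list \<Rightarrow> bool" where
  "sierp_adj t u v \<longleftrightarrow>
     (\<exists>s<t. (\<forall>j<s. u ! j = v ! j) \<and> u ! s \<noteq> v ! s \<and>
            (\<forall>j. s < j \<and> j < t \<longrightarrow> u ! j = v ! s \<and> v ! j = u ! s))"

end

theory Submission
  imports Defs
begin



definition adj_at :: "nat \<Rightarrow> nat list \<Rightarrow> nat list \<Rightarrow> nat \<Rightarrow> bool" where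
  "adj_at t v w s \<longleftrightarrow> s<t \<and> (\<forall>j<s. v!j = w!j) \<and> v!s \<noteq> w!s \<and>
     (\<forall>j. s<j \<and> j<t \<longrightarrow> v!j = w!s \<and> w!j = v!s)"

lemma sierp_adj_iff: "sierp_adj t v w \<longleftrightarrow> (\<exists>s. adj_at t v w s)"
  by (auto simp: sierp_adj_def adj_at_def)

lemma vert_Cons: "i#u \<in> sierp_vertices n (Suc m) \<longleftrightarrow> i\<in>{1..n} \<and> u \<in> sierp_vertices n m"
  by (auto simp: sierp_vertices_def)

lemma vert_Suc_cases:
  assumes "v \<in> sierp_vertices n (Suc m)"
  obtains i u where "v = i#u" "i\<in>{1..n}" "u \<in> sierp_vertices n m"
  using assms by (cases v) (auto simp: sierp_vertices_def)

lemma rep_vert: "i\<in>{1..n} \<Longrightarrow> replicate m i \<in> sierp_vertices n m"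
  by (auto simp: sierp_vertices_def)

lemma finite_vert: "finite (sierp_vertices n m)"
proof -
  have "sierp_vertices n m = {xs. set xs \<subseteq> {1..n} \<and> length xs = m}"
    by (auto simp: sierp_vertices_def)
  then show ?thesis by (simp add: finite_lists_length_eq)
qed

lemma card_vert: "card (sierp_vertices n m) = n ^ m"
proof -
  have "sierp_vertices n m = {xs. set xs \<subseteq> {1..n} \<and> length xs = m}"
    by (auto simp: sierp_vertices_def)
  then show ?thesis by (simp add: card_lists_length_eq)
qed

lemma adj_Cons: "sierp_adj m u v \<Longrightarrow> sierp_adj (Suc m) (i#u) (i#v)"
  unfolding sierp_adj_iff
proof (elim exE)
  fix s assume a: "adj_at m u v s"
  have "adj_at (Suc m) (i#u) (i#v) (Suc s)"
    unfolding adj_at_def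
  proof (intro conjI allI impI)
    show "Suc s < Suc m" using a by (simp add: adj_at_def)
    show "(i # u) ! j = (i # v) ! j" if "j < Suc s" for j
      using a that by (cases j) (auto simp: adj_at_def)
    show "(i # u) ! Suc s \<noteq> (i # v) ! Suc s" using a by (simp add: adj_at_def)
    fix j assume j: "Suc s < j \<and> j < Suc m"
    then obtain j' where "j = Suc j'" by (cases j) auto
    with a j show "(i # u) ! j = (i # v) ! Suc s" "(i # v) ! j = (i # u) ! Suc s"
      by (auto simp: adj_at_def)
  qed
  then show "\<exists>s. adj_at (Suc m) (i#u) (i#v) s" by blast
qed

lemma adj_cross: "i \<noteq> a \<Longrightarrow> sierp_adj (Suc m) (i # replicate m a) (a # replicate m i)"
  unfolding sierp_adj_iff
proof
  assume "i \<noteq> a"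
  show "adj_at (Suc m) (i # replicate m a) (a # replicate m i) 0"
    unfolding adj_at_def
  proof (intro conjI allI impI)
    fix j assume j: "0 < j \<and> j < Suc m"
    then obtain j' where "j = Suc j'" by (cases j) auto
    with j show "(i # replicate m a) ! j = (a # replicate m i) ! 0"
       "(a # replicate m i) ! j = (i # replicate m a) ! 0" by auto
  qed (use \<open>i \<noteq> a\<close> in auto)
qed

definition domx :: "nat \<Rightarrow> nat \<Rightarrow> nat list set \<Rightarrow> nat list set \<Rightarrow> bool" where
  "domx n m D X \<longleftrightarrow> finite D \<and> D \<subseteq> sierp_vertices n m \<and>
     (\<forall>v\<in>sierp_vertices n m - X. v \<in> D \<or> (\<exists>d\<in>D. sierp_adj m v d))"

definition "PE n m \<longleftrightarrow> (\<exists>D. domx n m D {} \<and> (\<forall>i\<in>{1..n}. replicate m i \<in> D) \<and> (n+1)*card D \<le> n^m + n)"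
definition "PF n m a \<longleftrightarrow> (\<exists>D. domx n m D {replicate m a} \<and> (n+1)*card D + 1 \<le> n^m)"
definition "PG n m a \<longleftrightarrow> (\<exists>D. domx n m D {} \<and> replicate m a \<in> D \<and> (n+1)*card D \<le> n^m + 1)"
definition "PH n m \<longleftrightarrow> (\<exists>D. domx n m D ((\<lambda>i. replicate m i) ` {1..n}) \<and> (n+1)*card D + n \<le> n^m)"

lemma card_Cons_img: "card (Cons i ` F) = card F"
  by (simp add: card_image)

lemma card_U_const:
  assumes "finite I"
  shows "card (\<Union>i\<in>I. Cons i ` F) \<le> card I * card F"
proof -
  have "card (\<Union>i\<in>I. Cons i ` F) \<le> (\<Sum>i\<in>I. card (Cons i ` F))" using card_UN_le[OF assms] .
  also have "\<dots> = card I * card F" by (simp add: card_Cons_img)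
  finally show ?thesis .
qed

lemma card_U_var:
  assumes "finite I"
  shows "card (\<Union>i\<in>I. Cons i ` F i) \<le> (\<Sum>i\<in>I. card (F i))"
proof -
  have "card (\<Union>i\<in>I. Cons i ` F i) \<le> (\<Sum>i\<in>I. card (Cons i ` F i))" using card_UN_le[OF assms] .
  also have "\<dots> = (\<Sum>i\<in>I. card (F i))" by (simp add: card_Cons_img)
  finally show ?thesis .
qed




lemma domxD:
  assumes "domx n m D X" "v \<in> sierp_vertices n m" "v \<notin> X"
  shows "v \<in> D \<or> (\<exists>d\<in>D. sierp_adj m v d)"
  using assms by (auto simp: domx_def)

lemma lift_dom:
  assumes "domx n m D X" "u \<in> sierp_vertices n m" "u \<notin> X" "Cons i ` D \<subseteq> D'"
  shows "i#u \<in> D' \<or> (\<exists>d\<in>D'. sierp_adj (Suc m) (i#u) d)"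
  using domxD[OF assms(1-3)] assms(4) adj_Cons by blast

lemma step_G:
  assumes n: "n \<ge> 2" and a: "a \<in> {1..n}" and "PE n m" and "PF n m a"
  shows "PG n (Suc m) a"
proof -
  from assms(3) obtain E where E: "domx n m E {}" "\<forall>i\<in>{1..n}. replicate m i \<in> E"
      "(n+1)*card E \<le> n^m + n" by (auto simp: PE_def)
  from assms(4) obtain F where F: "domx n m F {replicate m a}" "(n+1)*card F + 1 \<le> n^m"
    by (auto simp: PF_def)
  define D where "D = Cons a ` E \<union> (\<Union>i\<in>{1..n}-{a}. Cons i ` F)"
  have fin: "finite D" using E(1) F(1) by (auto simp: D_def domx_def)
  have sub: "D \<subseteq> sierp_vertices n (Suc m)" using E(1) F(1) a
    by (auto simp: D_def domx_def vert_Cons)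
  have dom: "v \<in> D \<or> (\<exists>d\<in>D. sierp_adj (Suc m) v d)" if v: "v \<in> sierp_vertices n (Suc m)" for v
  proof -
    obtain i u where vi: "v = i#u" "i\<in>{1..n}" "u \<in> sierp_vertices n m"
      using vert_Suc_cases[OF v] by blast
    show ?thesis
    proof (cases "i = a")
      case True
      have "Cons a ` E \<subseteq> D" by (auto simp: D_def)
      then show ?thesis using lift_dom[OF E(1) vi(3)] vi True by auto
    next
      case False
      show ?thesis
      proof (cases "u = replicate m a")
        case True
        have "a # replicate m i \<in> D" using E(2) vi(2) by (auto simp: D_def)
        then show ?thesis using adj_cross[OF False] vi True by auto
      next
        case f2: False
        have "Cons i ` F \<subseteq> D" using False vi(2) by (auto simp: D_def)
        then show ?thesis using lift_dom[OF F(1) vi(3)] vi f2 by auto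
      qed
    qed
  qed
  have cD: "card D \<le> card E + (n-1) * card F"
  proof -
    have "card D \<le> card (Cons a ` E) + card (\<Union>i\<in>{1..n}-{a}. Cons i ` F)"
      unfolding D_def by (rule card_Un_le)
    also have "\<dots> \<le> card E + card ({1..n}-{a}) * card F"
      using card_U_const[of "{1..n}-{a}" F] by (simp add: card_Cons_img)
    also have "card ({1..n}-{a}) = n - 1" using a by simp
    finally show ?thesis .
  qed
  obtain k where k: "n = Suc k" using n by (cases n) auto
  have "k * ((n+1)*card F + 1) \<le> k * n^m" using F(2) by (rule mult_le_mono2)
  then have h1: "k*((n+1)*card F) + k \<le> k * n^m" by (simp add: algebra_simps)
  have "(n+1)*card D \<le> (n+1)*card E + k*((n+1)*card F)"
    using mult_le_mono2[OF cD, of "n+1"] k by (simp add: algebra_simps)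
  also have "\<dots> \<le> n^Suc m + 1" using h1 E(3) k by (simp add: algebra_simps)
  finally have "(n+1)*card D \<le> n^Suc m + 1" .
  moreover have "replicate (Suc m) a \<in> D" using E(2) a by (auto simp: D_def)
  moreover have "domx n (Suc m) D {}" using fin sub dom by (auto simp: domx_def)
  ultimately show ?thesis unfolding PG_def by blast
qed

lemma step_F:
  assumes n: "n \<ge> 2" and a: "a \<in> {1..n}" and "PH n m" and "PG n m a"
  shows "PF n (Suc m) a"
proof -
  from assms(3) obtain H where H: "domx n m H ((\<lambda>i. replicate m i) ` {1..n})"
      "(n+1)*card H + n \<le> n^m" by (auto simp: PH_def)
  from assms(4) obtain G where G: "domx n m G {}" "replicate m a \<in> G" "(n+1)*card G \<le> n^m + 1"
    by (auto simp: PG_def)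
  define D where "D = Cons a ` H \<union> (\<Union>i\<in>{1..n}-{a}. Cons i ` G)"
  have fin: "finite D" using H(1) G(1) by (auto simp: D_def domx_def)
  have sub: "D \<subseteq> sierp_vertices n (Suc m)" using H(1) G(1) a
    by (auto simp: D_def domx_def vert_Cons)
  have dom: "v \<in> D \<or> (\<exists>d\<in>D. sierp_adj (Suc m) v d)"
    if v: "v \<in> sierp_vertices n (Suc m)" "v \<noteq> replicate (Suc m) a" for v
  proof -
    obtain i u where vi: "v = i#u" "i\<in>{1..n}" "u \<in> sierp_vertices n m"
      using vert_Suc_cases[OF v(1)] by blast
    show ?thesis
    proof (cases "i = a")
      case True
      show ?thesis
      proof (cases "u \<in> (\<lambda>i. replicate m i) ` {1..n}")
        case True
        then obtain j where j: "j \<in> {1..n}" "u = replicate m j" by auto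
        have "a \<noteq> j" using v(2) vi j \<open>i = a\<close> by auto
        then have "j # replicate m a \<in> D" using G(2) j by (auto simp: D_def)
        then show ?thesis using adj_cross[OF \<open>a \<noteq> j\<close>, of m] vi j \<open>i = a\<close> by auto
      next
        case False
        have "Cons a ` H \<subseteq> D" by (auto simp: D_def)
        then show ?thesis using lift_dom[OF H(1) vi(3) False] vi \<open>i = a\<close> by auto
      qed
    next
      case False
      have "Cons i ` G \<subseteq> D" using False vi(2) by (auto simp: D_def)
      then show ?thesis using lift_dom[OF G(1) vi(3)] vi by auto
    qed
  qed
  have cD: "card D \<le> card H + (n-1) * card G"
  proof -
    have "card D \<le> card (Cons a ` H) + card (\<Union>i\<in>{1..n}-{a}. Cons i ` G)"
      unfolding D_def by (rule card_Un_le)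
    also have "\<dots> \<le> card H + card ({1..n}-{a}) * card G"
      using card_U_const[of "{1..n}-{a}" G] by (simp add: card_Cons_img)
    also have "card ({1..n}-{a}) = n - 1" using a by simp
    finally show ?thesis .
  qed
  obtain k where k: "n = Suc k" using n by (cases n) auto
  have "k * ((n+1)*card G) \<le> k * (n^m + 1)" using G(3) by (rule mult_le_mono2)
  then have h1: "k*((n+1)*card G) \<le> k * n^m + k" by (simp add: algebra_simps)
  have "(n+1)*card D \<le> (n+1)*card H + k*((n+1)*card G)"
    using mult_le_mono2[OF cD, of "n+1"] k by (simp add: algebra_simps)
  then have "(n+1)*card D + 1 \<le> n^Suc m" using h1 H(2) k by (simp add: algebra_simps)
  moreover have "domx n (Suc m) D {replicate (Suc m) a}" using fin sub dom by (auto simp: domx_def)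
  ultimately show ?thesis unfolding PF_def by blast
qed

lemma step_E:
  assumes n: "n \<ge> 2" and G: "\<forall>a\<in>{1..n}. PG n m a"
  shows "PE n (Suc m)"
proof -
  from G have "\<forall>a\<in>{1..n}. \<exists>D. domx n m D {} \<and> replicate m a \<in> D \<and> (n+1)*card D \<le> n^m + 1"
    by (auto simp: PG_def)
  then obtain Gf where Gf: "\<And>a. a\<in>{1..n} \<Longrightarrow> domx n m (Gf a) {} \<and> replicate m a \<in> Gf a \<and> (n+1)*card (Gf a) \<le> n^m + 1"
    by metis
  define D where "D = (\<Union>i\<in>{1..n}. Cons i ` Gf i)"
  have fin: "finite D" using Gf by (auto simp: D_def domx_def)
  have sub: "D \<subseteq> sierp_vertices n (Suc m)" using Gf
    by (fastforce simp: D_def domx_def vert_Cons)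
  have dom: "v \<in> D \<or> (\<exists>d\<in>D. sierp_adj (Suc m) v d)" if v: "v \<in> sierp_vertices n (Suc m)" for v
  proof -
    obtain i u where vi: "v = i#u" "i\<in>{1..n}" "u \<in> sierp_vertices n m"
      using vert_Suc_cases[OF v] by blast
    have "Cons i ` Gf i \<subseteq> D" using vi(2) by (auto simp: D_def)
    then show ?thesis using lift_dom[of n m "Gf i" "{}" u] Gf[OF vi(2)] vi by auto
  qed
  have "(n+1)*card D \<le> (n+1)*(\<Sum>i\<in>{1..n}. card (Gf i))"
    unfolding D_def by (rule mult_le_mono2, rule card_U_var, simp)
  also have "\<dots> = (\<Sum>i\<in>{1..n}. (n+1)*card (Gf i))" by (simp add: sum_distrib_left)
  also have "\<dots> \<le> (\<Sum>i\<in>{1..n}. n^m + 1)" by (rule sum_mono) (use Gf in auto)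
  also have "\<dots> = n^Suc m + n" by (simp add: algebra_simps)
  finally have "(n+1)*card D \<le> n^Suc m + n" .
  moreover have "\<forall>i\<in>{1..n}. replicate (Suc m) i \<in> D"
  proof
    fix i assume i: "i \<in> {1..n}"
    then have "replicate m i \<in> Gf i" using Gf by blast
    then show "replicate (Suc m) i \<in> D" using i unfolding D_def by auto
  qed
  moreover have "domx n (Suc m) D {}" using fin sub dom by (auto simp: domx_def)
  ultimately show ?thesis unfolding PE_def by blast
qed

lemma step_H:
  assumes n: "n \<ge> 2" and F: "\<forall>a\<in>{1..n}. PF n m a"
  shows "PH n (Suc m)"
proof -
  from F have "\<forall>a\<in>{1..n}. \<exists>D. domx n m D {replicate m a} \<and> (n+1)*card D + 1 \<le> n^m"
    by (auto simp: PF_def)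
  then obtain Ff where Ff: "\<And>a. a\<in>{1..n} \<Longrightarrow> domx n m (Ff a) {replicate m a} \<and> (n+1)*card (Ff a) + 1 \<le> n^m"
    by metis
  define D where "D = (\<Union>i\<in>{1..n}. Cons i ` Ff i)"
  have fin: "finite D" using Ff by (auto simp: D_def domx_def)
  have sub: "D \<subseteq> sierp_vertices n (Suc m)" using Ff
    by (fastforce simp: D_def domx_def vert_Cons)
  have dom: "v \<in> D \<or> (\<exists>d\<in>D. sierp_adj (Suc m) v d)"
    if v: "v \<in> sierp_vertices n (Suc m)" "v \<notin> (\<lambda>i. replicate (Suc m) i) ` {1..n}" for v
  proof -
    obtain i u where vi: "v = i#u" "i\<in>{1..n}" "u \<in> sierp_vertices n m"
      using vert_Suc_cases[OF v(1)] by blast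
    have "u \<noteq> replicate m i" using v(2) vi by auto
    have "Cons i ` Ff i \<subseteq> D" using vi(2) by (auto simp: D_def)
    then show ?thesis using lift_dom[of n m "Ff i" "{replicate m i}" u] Ff[OF vi(2)] vi
        \<open>u \<noteq> replicate m i\<close> by auto
  qed
  have "(n+1)*card D + n \<le> (n+1)*(\<Sum>i\<in>{1..n}. card (Ff i)) + (\<Sum>i\<in>{1..n}. 1)"
  proof -
    have "(n+1)*card D \<le> (n+1)*(\<Sum>i\<in>{1..n}. card (Ff i))"
      unfolding D_def by (rule mult_le_mono2, rule card_U_var, simp)
    moreover have "(\<Sum>i\<in>{1..n}. (1::nat)) = n" by simp
    ultimately show ?thesis by linarith
  qed
  also have "\<dots> = (\<Sum>i\<in>{1..n}. (n+1)*card (Ff i) + 1)" by (simp only: sum_distrib_left sum.distrib)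
  also have "\<dots> \<le> (\<Sum>i\<in>{1..n}. n^m)" by (rule sum_mono) (use Ff in auto)
  also have "\<dots> = n^Suc m" by simp
  finally have "(n+1)*card D + n \<le> n^Suc m" .
  moreover have "domx n (Suc m) D ((\<lambda>i. replicate (Suc m) i) ` {1..n})"
    using fin sub dom by (auto simp: domx_def)
  ultimately show ?thesis unfolding PH_def by blast
qed

lemma construct:
  assumes n: "n \<ge> 2"
  shows "(even m \<longrightarrow> PE n m \<and> (\<forall>a\<in>{1..n}. PF n m a)) \<and> (odd m \<longrightarrow> (\<forall>a\<in>{1..n}. PG n m a) \<and> PH n m)"
proof (induction m)
  case 0
  have "domx n 0 {[]} {}" by (auto simp: domx_def sierp_vertices_def)
  then have "PE n 0" unfolding PE_def by (intro exI[of _ "{[]}"]) auto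
  moreover have "PF n 0 a" for a
    unfolding PF_def by (intro exI[of _ "{}"]) (auto simp: domx_def sierp_vertices_def)
  ultimately show ?case by simp
next
  case (Suc m)
  show ?case
  proof (cases "even m")
    case True
    then show ?thesis using Suc step_G[OF n] step_H[OF n] by auto
  next
    case False
    then show ?thesis using Suc step_E[OF n] step_F[OF n] by auto
  qed
qed




lemma adj_lt_not:
  assumes "adj_at t v w s" "adj_at t v' w s'" "s < t-1" "s' < t-1" "s < s'"
  shows False
proof -
  have "w!s' = v!s" using assms(1,4,5) by (auto simp: adj_at_def)
  moreover have "w!(t-1) = v!s" using assms(1,3) by (auto simp: adj_at_def)
  moreover have "w!(t-1) = v'!s'" using assms(2,4) by (auto simp: adj_at_def)
  moreover have "v'!s' \<noteq> w!s'" using assms(2) by (auto simp: adj_at_def)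
  ultimately show False by simp
qed

lemma adj_unique:
  assumes "adj_at t v w s" "adj_at t v' w s'" "s < t-1" "s' < t-1"
    "length v = t" "length v' = t"
  shows "v = v'"
proof -
  have ss: "s = s'" using adj_lt_not[OF assms(1-4)] adj_lt_not[OF assms(2,1,4,3)] by (meson linorder_neqE_nat)
  show ?thesis
  proof (rule nth_equalityI)
    show "length v = length v'" using assms by simp
    fix j assume "j < length v"
    then have j: "j < t" using assms by simp
    consider "j < s" | "j = s" | "s < j" by linarith
    then show "v!j = v'!j"
    proof cases
      case 1 then show ?thesis using assms(1,2) ss by (auto simp: adj_at_def)
    next
      case 2
      have "w!(t-1) = v!s" using assms(1,3) by (auto simp: adj_at_def)
      moreover have "w!(t-1) = v'!s" using assms(2,4) ss by (auto simp: adj_at_def)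
      ultimately show ?thesis using 2 by simp
    next
      case 3 then show ?thesis using assms(1,2) ss j by (auto simp: adj_at_def)
    qed
  qed
qed

lemma deg:
  assumes w: "w \<in> sierp_vertices n t" and t: "t \<ge> 1"
  shows "card {v\<in>sierp_vertices n t. sierp_adj t v w} \<le> n"
proof -
  let ?N = "{v\<in>sierp_vertices n t. sierp_adj t v w}"
  define phi where "phi v = (if (\<forall>j<t-1. v!j = w!j) then v!(t-1) else w!(t-1))" for v
  have lenw: "length w = t" and setw: "set w \<subseteq> {1..n}" using w by (auto simp: sierp_vertices_def)
  have A: "v!(t-1) \<noteq> w!(t-1)" if vN: "v \<in> ?N" "\<forall>j<t-1. v!j = w!j" for v
  proof -
    obtain s where s: "adj_at t v w s" using vN(1) unfolding sierp_adj_iff by blast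
    have "\<not> s < t-1" using s vN(2) by (auto simp: adj_at_def)
    then have "s = t-1" using s by (auto simp: adj_at_def)
    then show ?thesis using s by (auto simp: adj_at_def)
  qed
  have B: "\<exists>s. adj_at t v w s \<and> s < t-1" if vN: "v \<in> ?N" "\<not>(\<forall>j<t-1. v!j = w!j)" for v
  proof -
    obtain s where s: "adj_at t v w s" using vN(1) unfolding sierp_adj_iff by blast
    obtain j where j: "j < t-1" "v!j \<noteq> w!j" using vN(2) by auto
    have "\<not> j < s" using s j by (auto simp: adj_at_def)
    then show ?thesis using s j by (intro exI[of _ s]) auto
  qed
  have inj: "inj_on phi ?N"
  proof (rule inj_onI)
    fix v v' assume v: "v \<in> ?N" and v': "v' \<in> ?N" and eq: "phi v = phi v'"
    have lv: "length v = t" "length v' = t" using v v' by (auto simp: sierp_vertices_def)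
    show "v = v'"
    proof (cases "\<forall>j<t-1. v!j = w!j")
      case T1: True
      show ?thesis
      proof (cases "\<forall>j<t-1. v'!j = w!j")
        case True
        have "v!(t-1) = v'!(t-1)" using eq T1 True by (simp add: phi_def)
        show ?thesis
        proof (rule nth_equalityI)
          show "length v = length v'" using lv by simp
          fix j assume "j < length v"
          then have "j < t-1 \<or> j = t-1" using lv by linarith
          then show "v!j = v'!j" using T1 True \<open>v!(t-1) = v'!(t-1)\<close> by auto
        qed
      next
        case False
        then have "phi v = v!(t-1)" "phi v' = w!(t-1)" using T1 by (auto simp: phi_def)
        then show ?thesis using A[OF v T1] eq by simp
      qed
    next
      case F1: False
      show ?thesis
      proof (cases "\<forall>j<t-1. v'!j = w!j")
        case True
        then have "phi v' = v'!(t-1)" "phi v = w!(t-1)" using F1 by (auto simp: phi_def)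
        then show ?thesis using A[OF v' True] eq by simp
      next
        case False
        obtain s where s: "adj_at t v w s" "s < t-1" using B[OF v F1] by blast
        obtain s' where s': "adj_at t v' w s'" "s' < t-1" using B[OF v' False] by blast
        show ?thesis using adj_unique[OF s(1) s'(1) s(2) s'(2) lv] .
      qed
    qed
  qed
  have img: "phi ` ?N \<subseteq> {1..n}"
  proof
    fix x assume "x \<in> phi ` ?N"
    then obtain v where v: "v \<in> ?N" "x = phi v" by auto
    have "v!(t-1) \<in> set v" using v(1) t by (auto simp: sierp_vertices_def)
    moreover have "w!(t-1) \<in> set w" using lenw t by auto
    ultimately show "x \<in> {1..n}" using v setw by (auto simp: phi_def sierp_vertices_def)
  qed
  have "card ?N \<le> card {1..n}" by (rule card_inj_on_le[OF inj img]) simp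
  then show ?thesis by simp
qed




lemma exists_c: "\<exists>c::nat. (n+1)*c = n^t + (if odd t then 1 else n)"
proof -
  have "\<exists>c::int. (int n+1)*c = int n^t + (if odd t then 1 else int n)"
  proof (induction t)
    case 0 then show ?case by (intro exI[of _ 1]) simp
  next
    case (Suc t)
    then obtain c where c: "(int n+1)*c = int n^t + (if odd t then 1 else int n)" by blast
    show ?case
    proof (cases "odd t")
      case True
      have "(int n+1)*(int n * c) = int n * ((int n+1)*c)" by (simp add: algebra_simps)
      also have "\<dots> = int n * (int n^t + 1)" using c True by simp
      also have "\<dots> = int n^Suc t + int n" by (simp add: algebra_simps)
      finally show ?thesis using True by (intro exI[of _ "int n * c"]) simp
    next
      case False
      have "(int n+1)*(int n * c - int n + 1) = int n * ((int n+1)*c) - int n * int n + 1"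
        by (simp add: algebra_simps)
      also have "\<dots> = int n * (int n^t + int n) - int n * int n + 1" using c False by simp
      also have "\<dots> = int n^Suc t + 1" by (simp add: algebra_simps)
      finally show ?thesis using False by (intro exI[of _ "int n * c - int n + 1"]) simp
    qed
  qed
  then obtain c where c: "(int n+1)*c = int n^t + (if odd t then 1 else int n)" by blast
  have "c \<ge> 0"
  proof (rule ccontr)
    assume "\<not> c \<ge> 0"
    then have "(int n+1)*c < 0" by (simp add: mult_pos_neg)
    moreover have "int n^t + (if odd t then 1 else int n) \<ge> 0" by simp
    ultimately show False using c by simp
  qed
  then have "int ((n+1)*nat c) = int (n^t + (if odd t then 1 else n))" using c by (cases "odd t") (simp_all add: algebra_simps)
  then show ?thesis by (intro exI[of _ "nat c"]) (simp only: of_nat_eq_iff)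
qed

lemma sum_ind: "finite V \<Longrightarrow> (\<Sum>v\<in>V. if P v then (k::nat) else 0) = k * card {v\<in>V. P v}"
  by (simp add: sum.inter_filter[symmetric])




lemma arith_lb:
  fixes n a b c r :: nat
  assumes "(n+1)*c \<le> (n+1)*a + b + r" "n \<ge> 2" "r = 1 \<or> r = n"
  shows "2*c \<le> b + 2*a + (if r = 1 then 0 else 1)"
proof (cases "c \<le> a")
  case True then show ?thesis by auto
next
  case False
  define d where "d = c - a - 1"
  have d: "c = a + d + 1" using False unfolding d_def by linarith
  have e: "(n+1)*c = (n+1)*a + (n*d + d + n + 1)" unfolding d by (simp add: algebra_simps)
  have "n*d \<ge> d" using assms(2) by simp
  have f: "n*d + d + n + 1 \<le> b + r" using assms(1) e by linarith
  show ?thesis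
  proof (cases "r = 1")
    case True
    have "2*c \<le> b + 2*a" using f d \<open>n*d \<ge> d\<close> assms(2) True by linarith
    then show ?thesis using True by simp
  next
    case False then have "r = n" using assms(3) by simp
    have "2*c \<le> b + 2*a + 1" using f d \<open>n*d \<ge> d\<close> \<open>r = n\<close> by linarith
    then show ?thesis using False by simp
  qed
qed

lemma lower:
  assumes n: "n \<ge> 2" and t: "t \<ge> 1" and f: "roman_dominating (sierp_vertices n t) (sierp_adj t) f"
    and c: "(n+1)*c = n^t + (if odd t then 1 else n)"
  shows "2*c \<le> roman_weight (sierp_vertices n t) f + (if odd t then 0 else 1)"
proof -
  let ?V = "sierp_vertices n t"
  define V0 where "V0 = {v\<in>?V. f v = 0}"
  define V1 where "V1 = {v\<in>?V. f v = 1}"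
  define V2 where "V2 = {v\<in>?V. f v = 2}"
  have fin: "finite ?V" by (rule finite_vert)
  have fv: "f v \<in> {0,1,2}" if "v \<in> ?V" for v using f that by (auto simp: roman_dominating_def)
  have "roman_weight ?V f = (\<Sum>v\<in>?V. (if f v = 1 then 1 else 0) + (if f v = 2 then 2 else 0))"
    unfolding roman_weight_def by (rule sum.cong) (use fv in auto)
  also have "\<dots> = card V1 + 2 * card V2"
    unfolding sum.distrib sum_ind[OF fin] V1_def V2_def by simp
  finally have W: "roman_weight ?V f = card V1 + 2 * card V2" .
  have "card ?V = (\<Sum>v\<in>?V. (if f v = 0 then 1 else 0) + (if f v = 1 then 1 else 0) + (if f v = 2 then 1 else 0))"
    unfolding card_eq_sum by (rule sum.cong) (use fv in fastforce)+
  also have "\<dots> = card V0 + card V1 + card V2"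
    unfolding sum.distrib sum_ind[OF fin] V0_def V1_def V2_def by simp
  finally have cV: "n^t = card V0 + card V1 + card V2" by (simp add: card_vert)
  have "V0 \<subseteq> (\<Union>w\<in>V2. {v\<in>?V. sierp_adj t v w})"
    using f by (auto simp: V0_def V2_def roman_dominating_def)
  then have "card V0 \<le> card (\<Union>w\<in>V2. {v\<in>?V. sierp_adj t v w})"
    by (intro card_mono) (auto intro: finite_subset[OF _ fin])
  also have "\<dots> \<le> (\<Sum>w\<in>V2. card {v\<in>?V. sierp_adj t v w})"
    by (rule card_UN_le) (auto simp: V2_def intro: finite_subset[OF _ fin])
  also have "\<dots> \<le> of_nat (card V2) * n"
    by (rule sum_bounded_above) (use deg t in \<open>auto simp: V2_def\<close>)
  finally have c0: "card V0 \<le> card V2 * n" by simp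
  let ?a = "card V2" and ?b = "card V1"
  define r where "r = (if odd t then 1 else n)"
  have key: "(n+1)*c \<le> (n+1)*?a + ?b + r"
  proof -
    have "(n+1)*c = card V0 + card V1 + card V2 + r" using c cV r_def by simp
    also have "\<dots> \<le> card V2 * n + card V1 + card V2 + r" using c0 by simp
    also have "\<dots> = (n+1)*?a + ?b + r" by (simp add: algebra_simps)
    finally show ?thesis .
  qed
  have "r = 1 \<or> r = n" by (simp add: r_def)
  from arith_lb[OF key n this] show ?thesis using W n by (cases "odd t") (auto simp: r_def)
qed



lemma upper_odd:
  assumes n: "n \<ge> 2" and t: "odd t" and c: "(n+1)*c = n^t + 1"
  shows "\<exists>f. roman_dominating (sierp_vertices n t) (sierp_adj t) f \<and> roman_weight (sierp_vertices n t) f \<le> 2*c"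
proof -
  have "PG n t 1" using construct[OF n, of t] t n by auto
  then obtain D where D: "domx n t D {}" "(n+1)*card D \<le> n^t + 1" by (auto simp: PG_def)
  define f where "f v = (if v \<in> D then 2 else (0::nat))" for v
  have rd: "roman_dominating (sierp_vertices n t) (sierp_adj t) f"
    unfolding roman_dominating_def
  proof (intro conjI ballI impI)
    fix u assume u: "u \<in> sierp_vertices n t" "f u = 0"
    then have "u \<notin> D" by (auto simp: f_def)
    then obtain d where "d \<in> D" "sierp_adj t u d" using D(1) u(1) by (auto simp: domx_def)
    then show "\<exists>v\<in>sierp_vertices n t. sierp_adj t u v \<and> f v = 2"
      using D(1) by (auto simp: domx_def f_def)
  qed (auto simp: f_def)
  have "roman_weight (sierp_vertices n t) f = 2 * card {v\<in>sierp_vertices n t. v \<in> D}"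
    unfolding roman_weight_def f_def by (rule sum_ind[OF finite_vert])
  also have "{v\<in>sierp_vertices n t. v \<in> D} = D" using D(1) by (auto simp: domx_def)
  finally have w: "roman_weight (sierp_vertices n t) f = 2 * card D" .
  have "(n+1)*card D \<le> (n+1)*c" using D(2) c by simp
  then have "card D \<le> c" using mult_le_cancel1[of "n+1" "card D" c] by simp
  then show ?thesis using rd w by (intro exI[of _ f]) auto
qed

lemma upper_even:
  assumes n: "n \<ge> 2" and t: "even t" and c: "(n+1)*c = n^t + n"
  shows "\<exists>f. roman_dominating (sierp_vertices n t) (sierp_adj t) f \<and> roman_weight (sierp_vertices n t) f + 1 \<le> 2*c"
proof -
  have "PF n t 1" using construct[OF n, of t] t n by auto
  then obtain D where D: "domx n t D {replicate t 1}" "(n+1)*card D + 1 \<le> n^t" by (auto simp: PF_def)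
  define x where "x = replicate t (1::nat)"
  define f where "f v = (if v \<in> D then 2 else if v = x then 1 else (0::nat))" for v
  have rd: "roman_dominating (sierp_vertices n t) (sierp_adj t) f"
    unfolding roman_dominating_def
  proof (intro conjI ballI impI)
    fix u assume u: "u \<in> sierp_vertices n t" "f u = 0"
    then have "u \<notin> D" "u \<noteq> replicate t 1" by (auto simp: f_def x_def split: if_splits)
    then obtain d where "d \<in> D" "sierp_adj t u d" using D(1) u(1) by (auto simp: domx_def)
    then show "\<exists>v\<in>sierp_vertices n t. sierp_adj t u v \<and> f v = 2"
      using D(1) by (auto simp: domx_def f_def)
  qed (auto simp: f_def)
  have "roman_weight (sierp_vertices n t) f \<le>
     (\<Sum>v\<in>sierp_vertices n t. (if v \<in> D then 2 else 0) + (if v = x then 1 else 0))"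
    unfolding roman_weight_def f_def by (rule sum_mono) auto
  also have "\<dots> \<le> 2 * card {v\<in>sierp_vertices n t. v \<in> D} + 1"
  proof -
    have "(\<Sum>v\<in>sierp_vertices n t. (if v = x then 1 else 0)) \<le> (1::nat)"
      by (subst sum.delta[OF finite_vert]) simp
    then show ?thesis unfolding sum.distrib sum_ind[OF finite_vert, of "\<lambda>v. v \<in> D"] by simp
  qed
  also have "{v\<in>sierp_vertices n t. v \<in> D} = D" using D(1) by (auto simp: domx_def)
  finally have w: "roman_weight (sierp_vertices n t) f \<le> 2 * card D + 1" by simp
  have "(n+1)*(card D + 1) \<le> (n+1)*c" using D(2) c by (simp add: algebra_simps)
  then have "card D + 1 \<le> c" by (simp only: mult_le_cancel1)
  then show ?thesis using rd w by (intro exI[of _ f]) auto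
qed

theorem theorem3p2:
  fixes n t :: nat
  assumes "n \<ge> 2" and "t \<ge> 1"
  shows "int (roman_domination_number (sierp_vertices n t) (sierp_adj t)) =
           (if odd t then 2 * \<lceil>real (n ^ t) / real (n + 1)\<rceil>
            else 2 * \<lceil>real (n ^ t) / real (n + 1)\<rceil> - 1)"
proof -
  let ?V = "sierp_vertices n t" and ?E = "sierp_adj t"
  define r where "r = (if odd t then 1 else n)"
  obtain c where c: "(n+1)*c = n^t + r" using exists_c r_def by blast
  have r1: "1 \<le> r" "r \<le> n" using assms by (auto simp: r_def)
  have ceil: "\<lceil>real (n ^ t) / real (n + 1)\<rceil> = int c"
  proof -
    have cr: "real (n+1) * real c = real (n^t) + real r" using c by (metis of_nat_add of_nat_mult)
    have pos: "real (n+1) > 0" by simp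
    have "real (n^t) \<le> real c * real (n+1)" using cr by (simp add: algebra_simps)
    then have le: "real (n^t) / real (n+1) \<le> real c" using pos by (simp add: divide_le_eq)
    have "(real c - 1) * real (n+1) < real (n^t)" using cr r1 by (simp add: algebra_simps)
    then have lt: "real c - 1 < real (n^t) / real (n+1)" using pos by (simp add: less_divide_eq)
    show ?thesis unfolding ceiling_eq_iff using le lt by simp
  qed
  define T where "T = (if odd t then 2*c else 2*c - 1)"
  define S where "S = {roman_weight ?V f | f. roman_dominating ?V ?E f}"
  have lowS: "T \<le> x" if xS: "x \<in> S" for x
  proof -
    obtain f where f: "x = roman_weight ?V f" "roman_dominating ?V ?E f" using xS S_def by blast
    have "2*c \<le> x + (if odd t then 0 else 1)" using lower[OF assms f(2)] c r_def f(1) by simp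
    then show ?thesis by (auto simp: T_def)
  qed
  obtain f where f: "roman_dominating ?V ?E f" "roman_weight ?V f \<le> T"
  proof (cases "odd t")
    case True
    then show ?thesis using upper_odd[OF assms(1) True] c r_def that T_def by auto
  next
    case False
    then obtain f where "roman_dominating ?V ?E f" "roman_weight ?V f + 1 \<le> 2*c"
      using upper_even[OF assms(1) _] c r_def by auto
    then show ?thesis using that False T_def by fastforce
  qed
  have inS: "roman_weight ?V f \<in> S" using f S_def by blast
  have "Inf S \<le> roman_weight ?V f" using inS by (rule cInf_lower) simp
  moreover have "T \<le> Inf S" using inS lowS by (intro cInf_greatest) auto
  ultimately have "roman_domination_number ?V ?E = T"
    using f(2) unfolding roman_domination_number_def S_def by linarith
  moreover have "c \<ge> 1"
  proof (rule ccontr)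
    assume "\<not> c \<ge> 1" then have "c = 0" by simp
    then show False using c assms by simp
  qed
  ultimately show ?thesis unfolding ceil T_def by auto
qed


end
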